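(* Let $\pi$ be a permutation of $\{1,\dots,n\}$ and consider forkstack sorting with unlimited capacities ($s=t=\infty$). Then $\pi$ is not sortable if and only if every allowable sequence of moves after which the input stack is empty produces, at some moment, the dreaded 13 in the working stack.
   Context: Forkstack sorting with capacities $s,t\in\{1,2,3,\dots\}\cup\{\infty\}$: a permutation $\pi=\pi_1\pi_2\cdots\pi_n$ of $\{1,\dots,n\}$ is placed on an input stack with $\pi_1$ on top and $\pi_n$ at the bottom; a working stack and an output stack are initially empty. A move is either (i) remove the top $k$ elements of the input stack, $1\le k\le s$, and place them as a block, with their relative order unchanged, on top of the working stack; or (ii) remove the top $l$ elements of the working stack, $1\le l\le t$, and place them as a block, with relative order unchanged, on top of the output stack. $\pi$ is sortable if some finite sequence of moves ends with the input and working stacks empty and the output stack reading $1,2,\dots,n$ from top to bottom. A sequence of moves is allowable if, after performing it, the output stack read from top to bottom is $k,k+1,\dots,n$ for some $k$ (or is empty). The dreaded 13 occurs at a moment if the working stack then contains an element $a$ lying immediately above an element $b$ with $a<b-1$. *)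

theory Defs
  imports Main "HOL-Library.Extended_Nat"
begin

text \<open>Forkstack configurations: (input, working, output), each a list with the
  head being the top of the stack.\<close>
type_synonym fstate = "nat list \<times> nat list \<times> nat list"

datatype fmove = Push nat | Pop nat

fun apply_move :: "enat \<Rightarrow> enat \<Rightarrow> fmove \<Rightarrow> fstate \<Rightarrow> fstate option" where
  "apply_move s t (Push k) (inp, w, out) =
     (if 1 \<le> k \<and> enat k \<le> s \<and> k \<le> length inp
      then Some (drop k inp, take k inp @ w, out) else None)"
| "apply_move s t (Pop l) (inp, w, out) =
     (if 1 \<le> l \<and> enat l \<le> t \<and> l \<le> length w
      then Some (inp, drop l w, take l w @ out) else None)"

fun exec_moves :: "enat \<Rightarrow> enat \<Rightarrow> fmove list \<Rightarrow> fstate \<Rightarrow> fstate option" where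
  "exec_moves s t [] st = Some st"
| "exec_moves s t (m # ms) st =
     (case apply_move s t m st of None \<Rightarrow> None | Some st' \<Rightarrow> exec_moves s t ms st')"

definition init_state :: "nat list \<Rightarrow> fstate" where
  "init_state \<pi> = (\<pi>, [], [])"

definition sortable :: "enat \<Rightarrow> enat \<Rightarrow> nat list \<Rightarrow> bool" where
  "sortable s t \<pi> \<longleftrightarrow>
     (\<exists>ms. exec_moves s t ms (init_state \<pi>) = Some ([], [], [1..<Suc (length \<pi>)]))"

definition allowable :: "enat \<Rightarrow> enat \<Rightarrow> nat list \<Rightarrow> fmove list \<Rightarrow> bool" where
  "allowable s t \<pi> ms \<longleftrightarrow>
     (\<exists>inp w out. exec_moves s t ms (init_state \<pi>) = Some (inp, w, out) \<and>
        (out = [] \<or> (\<exists>k\<ge>1. out = [k..<Suc (length \<pi>)])))"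

definition dreaded13 :: "nat list \<Rightarrow> bool" where
  "dreaded13 w \<longleftrightarrow> (\<exists>i. Suc i < length w \<and> int (w ! i) < int (w ! Suc i) - 1)"

definition work_of :: "fstate \<Rightarrow> nat list" where
  "work_of st = fst (snd st)"

definition input_of :: "fstate \<Rightarrow> nat list" where
  "input_of st = fst st"

end

theory Submission
  imports Defs "HOL-Library.Multiset"
begin

lemma exec_append:
  "exec_moves s t (xs @ ys) st =
     (case exec_moves s t xs st of None \<Rightarrow> None | Some st' \<Rightarrow> exec_moves s t ys st')"
  by (induction xs arbitrary: st) (auto split: option.splits)

lemma mset_take_drop: "mset (take k xs) + mset (drop k xs) = mset xs"
  by (simp flip: mset_append)

lemma apply_mset:
  assumes "apply_move s t mv (i, w, ou) = Some (i', w', ou')"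
  shows "mset (i' @ w' @ ou') = mset (i @ w @ ou)"
proof (cases mv)
  case (Push k)
  then have e: "i' = drop k i" "w' = take k i @ w" "ou' = ou" using assms by (auto split: if_splits)
  have "mset (drop k i @ take k i) = mset i"
    by (metis append_take_drop_id mset_append add.commute)
  then have "mset (drop k i @ take k i @ w @ ou) = mset (i @ w @ ou)"
    by (metis append.assoc mset_append)
  then show ?thesis using e by simp
next
  case (Pop l)
  then have e: "i' = i" "w' = drop l w" "ou' = take l w @ ou" using assms by (auto split: if_splits)
  have "mset (drop l w @ take l w) = mset w"
    by (metis append_take_drop_id mset_append add.commute)
  then have "mset (drop l w @ take l w @ ou) = mset (w @ ou)"
    by (metis append.assoc mset_append)
  then have "mset (i @ drop l w @ take l w @ ou) = mset (i @ w @ ou)"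
    by (metis mset_append)
  then show ?thesis using e by simp
qed

lemma exec_mset:
  "exec_moves s t ms (i, w, ou) = Some (i', w', ou') \<Longrightarrow> mset (i' @ w' @ ou') = mset (i @ w @ ou)"
proof (induction ms arbitrary: i w ou)
  case Nil then show ?case by simp
next
  case (Cons m ms)
  then obtain i1 w1 o1 where a: "apply_move s t m (i, w, ou) = Some (i1, w1, o1)"
    and e: "exec_moves s t ms (i1, w1, o1) = Some (i', w', ou')"
    by (auto split: option.splits)
  show ?case using Cons.IH[OF e] apply_mset[OF a] by simp
qed

definition Inv :: "nat \<Rightarrow> nat \<Rightarrow> nat list \<Rightarrow> nat list \<Rightarrow> bool" where
  "Inv a b w ou \<longleftrightarrow> (\<exists>w1 w2. w = w1 @ a # b # w2) \<or> (\<exists>o1 o2. ou = o1 @ a # b # o2)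
     \<or> (b \<in> set w \<and> a \<in> set ou) \<or> (\<exists>o1 o2 o3. ou = o1 @ b # o2 @ a # o3)"

lemma Inv_step:
  assumes "apply_move s t mv (i, w, ou) = Some (i', w', ou')" and "Inv a b w ou"
  shows "Inv a b w' ou'"
proof (cases mv)
  case (Push k)
  then have e: "w' = take k i @ w" "ou' = ou" using assms(1) by (auto split: if_splits)
  have "Inv a b (take k i @ w) ou" using assms(2) unfolding Inv_def
    apply (elim disjE exE)
    subgoal for w1 w2 by (rule disjI1, rule exI[of _ "take k i @ w1"], rule exI[of _ w2], simp)
    subgoal for o1 o2 by (rule disjI2, rule disjI1, rule exI[of _ o1], rule exI[of _ o2], assumption)
    subgoal by (rule disjI2, rule disjI2, rule disjI1, simp)
    subgoal for o1 o2 o3 by (rule disjI2, rule disjI2, rule disjI2, rule exI[of _ o1], rule exI[of _ o2],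
          rule exI[of _ o3], assumption)
    done
  then show ?thesis using e by simp
next
  case (Pop l)
  then have e: "w' = drop l w" "ou' = take l w @ ou" using assms(1) by (auto split: if_splits)
  have c24: "(\<exists>o1 o2. ou = o1 @ a # b # o2) \<or> (\<exists>o1 o2 o3. ou = o1 @ b # o2 @ a # o3) \<Longrightarrow> ?thesis"
    unfolding Inv_def e
    apply (elim disjE exE)
    subgoal for o1 o2 by (rule disjI2, rule disjI1, rule exI[of _ "take l w @ o1"], rule exI[of _ o2], simp)
    subgoal for o1 o2 o3 by (rule disjI2, rule disjI2, rule disjI2, rule exI[of _ "take l w @ o1"],
          rule exI[of _ o2], rule exI[of _ o3], simp)
    done
  consider (c1) w1 w2 where "w = w1 @ a # b # w2" | (c2) "(\<exists>o1 o2. ou = o1 @ a # b # o2)"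
    | (c3) "b \<in> set w" "a \<in> set ou" | (c4) "(\<exists>o1 o2 o3. ou = o1 @ b # o2 @ a # o3)"
    using assms(2) unfolding Inv_def by blast
  then show ?thesis
  proof cases
    case c1
    consider "l \<le> length w1" | "l = Suc (length w1)" | "l \<ge> Suc (Suc (length w1))" by linarith
    then show ?thesis
    proof cases
      case 1
      then have "drop l w = drop l w1 @ a # b # w2" using c1 by simp
      then show ?thesis unfolding Inv_def e by blast
    next
      case 2
      then have "drop l w = b # w2" "take l w = w1 @ [a]" using c1 by simp_all
      then have "b \<in> set (drop l w)" "a \<in> set (take l w @ ou)" by simp_all
      then show ?thesis unfolding Inv_def e by blast
    next
      case 3
      then have "take l w = w1 @ a # b # take (l - Suc (Suc (length w1))) w2" using c1
        by (simp add: take_append take_Cons' )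
      then have "take l w @ ou = w1 @ a # b # (take (l - Suc (Suc (length w1))) w2 @ ou)" by simp
      then show ?thesis unfolding Inv_def e by blast
    qed
  next
    case c2 then show ?thesis using c24 by blast
  next
    case c4 then show ?thesis using c24 by blast
  next
    case c3
    show ?thesis
    proof (cases "b \<in> set (drop l w)")
      case True
      have "a \<in> set (take l w @ ou)" using c3(2) by simp
      then show ?thesis using True unfolding Inv_def e by blast
    next
      case False
      then have "b \<in> set (take l w)" using c3 by (metis Un_iff append_take_drop_id set_append)
      then obtain t1 t2 where t: "take l w = t1 @ b # t2" by (meson split_list)
      obtain o1 o3 where ou: "ou = o1 @ a # o3" using c3 by (meson split_list)
      have "ou' = t1 @ b # (t2 @ o1) @ a # o3" using t ou e by simp
      then show ?thesis unfolding Inv_def by blast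
    qed
  qed
qed

lemma Inv_exec:
  "exec_moves s t ms (i, w, ou) = Some (i', w', ou') \<Longrightarrow> Inv a b w ou \<Longrightarrow> Inv a b w' ou'"
proof (induction ms arbitrary: i w ou)
  case Nil then show ?case by simp
next
  case (Cons m ms)
  then obtain i1 w1 o1 where a: "apply_move s t m (i, w, ou) = Some (i1, w1, o1)"
    and e: "exec_moves s t ms (i1, w1, o1) = Some (i', w', ou')"
    by (auto split: option.splits)
  show ?case using Cons.IH[OF e Inv_step[OF a Cons.prems(2)]] .
qed

lemma upt_split: "[m..<N] = xs @ x # ys \<Longrightarrow> x = m + length xs"
proof -
  assume h: "[m..<N] = xs @ x # ys"
  have "length xs < length [m..<N]" using h by simp
  then have "[m..<N] ! length xs = m + length xs" by simp
  then show ?thesis using h by simp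
qed

lemma no13_sorting:
  assumes "exec_moves s t ms (i, w1 @ a # b # w2, ou) = Some ([], [], [1..<N])"
  shows "\<not> (int a < int b - 1)"
proof -
  have "Inv a b (w1 @ a # b # w2) ou" unfolding Inv_def by blast
  from Inv_exec[OF assms this] have "Inv a b [] [1..<N]" .
  then consider o1 o2 where "[1..<N] = o1 @ a # b # o2"
    | o1 o2 o3 where "[1..<N] = o1 @ b # o2 @ a # o3"
    unfolding Inv_def by auto
  then show ?thesis
  proof cases
    case 1
    have "a = 1 + length o1" using upt_split[OF 1] .
    moreover have "b = 1 + length (o1 @ [a])" using upt_split[of 1 N "o1 @ [a]" b o2] 1 by simp
    ultimately show ?thesis by simp
  next
    case 2
    have "b = 1 + length o1" using upt_split[OF 2] .
    moreover have "a = 1 + length (o1 @ b # o2)" using upt_split[of 1 N "o1 @ b # o2" a o3] 2 by simp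
    ultimately show ?thesis by simp
  qed
qed

lemma run_lemma:
  assumes d: "distinct w" and n13: "\<not> dreaded13 w" and mx: "\<forall>x\<in>set w. x \<le> m"
    and p: "p < length w" "w ! p = m"
  shows "j \<le> p \<Longrightarrow> \<forall>j'\<le>j. int (w ! (p - j')) = int m - int j'"
proof (induction j)
  case 0 then show ?case using p by simp
next
  case (Suc j)
  then have IH: "\<forall>j'\<le>j. int (w ! (p - j')) = int m - int j'" by simp
  define q where "q = p - Suc j"
  have q1: "Suc q = p - j" "Suc q < length w" using Suc.prems p unfolding q_def by auto
  have "\<not> (int (w ! q) < int (w ! Suc q) - 1)" using n13 q1 unfolding dreaded13_def by blast
  then have ge: "int (w ! q) \<ge> int m - int j - 1" using IH q1 by force
  have le: "w ! q \<le> m" using mx q1 by simp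
  have ne: "int (w ! q) \<noteq> int m - int j'" if "j' \<le> j" for j'
  proof
    assume "int (w ! q) = int m - int j'"
    then have "int (w ! q) = int (w ! (p - j'))" using IH that by simp
    then have "w ! q = w ! (p - j')" by simp
    moreover have "q \<noteq> p - j'" using that Suc.prems unfolding q_def by simp
    ultimately show False using d q1 p by (simp add: nth_eq_iff_index_eq)
  qed
  have "int (w ! q) = int m - int (Suc j)"
  proof (rule ccontr)
    assume "int (w ! q) \<noteq> int m - int (Suc j)"
    then have "int (w ! q) \<ge> int m - int j" using ge by simp
    define j' where "j' = nat (int m - int (w ! q))"
    have "j' \<le> j" "int (w ! q) = int m - int j'" using le \<open>int (w ! q) \<ge> int m - int j\<close>
      unfolding j'_def by linarith+
    then show False using ne by blast
  qed
  then show ?case using IH q_def by (metis le_Suc_eq)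
qed

lemma pop_sort:
  "\<forall>w k. length w = L \<longrightarrow> distinct w \<longrightarrow> set w = {1..<k} \<longrightarrow> 1 \<le> k \<longrightarrow> k \<le> Suc N \<longrightarrow>
     \<not> dreaded13 w \<longrightarrow>
     (\<exists>ms. exec_moves \<infinity> \<infinity> ms ([], w, [k..<Suc N]) = Some ([], [], [1..<Suc N]))"
proof (induction L rule: less_induct)
  case (less L)
  show ?case
  proof (intro allI impI)
    fix w k
    assume L: "length w = L" and d: "distinct w" and sw: "set w = {1..<k}" and k1: "1 \<le> k"
      and kN: "k \<le> Suc N" and n13: "\<not> dreaded13 w"
    show "\<exists>ms. exec_moves \<infinity> \<infinity> ms ([], w, [k..<Suc N]) = Some ([], [], [1..<Suc N])"
    proof (cases "w = []")
      case True
      then have "k = 1" using sw k1 by simp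
      then show ?thesis using True by (intro exI[of _ "[]"]) simp
    next
      case False
      define m where "m = k - 1"
      have "{1..<k} \<noteq> {}" using False sw by (metis set_empty)
      then have k2: "k \<ge> 2" by simp
      have mw: "m \<in> set w" using sw k2 unfolding m_def by auto
      have mx: "\<forall>x\<in>set w. x \<le> m" using sw unfolding m_def by auto
      obtain p where p: "p < length w" "w ! p = m" using mw by (meson in_set_conv_nth)
      have R: "\<forall>j'\<le>p. int (w ! (p - j')) = int m - int j'"
        using run_lemma[OF d n13 mx p] by simp
      have "w ! 0 \<in> set w" using False by (metis length_greater_0_conv nth_mem)
      then have g1: "w ! 0 \<ge> 1" using sw by (metis atLeastLessThan_iff)
      have "int (w ! (p - p)) = int m - int p" using R by blast
      then have "int (w ! 0) = int m - int p" by simp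
      with g1 have mp: "m \<ge> p + 1" by linarith
      have tk: "take (Suc p) w = [m - p..<Suc m]"
      proof (rule nth_equalityI)
        show "length (take (Suc p) w) = length [m - p..<Suc m]" using p mp by simp
      next
        fix i assume "i < length (take (Suc p) w)"
        then have i: "i \<le> p" using p by simp
        have "p - i \<le> p" by simp
        then have "int (w ! (p - (p - i))) = int m - int (p - i)" using R by blast
        then have "int (w ! i) = int m - int (p - i)" using i by simp
        then have "w ! i = m - p + i" using i mp by simp
        then show "take (Suc p) w ! i = [m - p..<Suc m] ! i" using i p mp by (simp del: upt_Suc)
      qed
      define w' where "w' = drop (Suc p) w"
      have d': "distinct w'" using d unfolding w'_def by simp
      have "set w = set (take (Suc p) w) \<union> set w'" unfolding w'_def
        by (metis append_take_drop_id set_append)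
      moreover have "set (take (Suc p) w) \<inter> set w' = {}" unfolding w'_def
        using d by (metis append_take_drop_id distinct_append)
      ultimately have "set w' = set w - set (take (Suc p) w)" by blast
      moreover have "set (take (Suc p) w) = {m - p..<Suc m}" using tk by (simp only: set_upt)
      moreover have "set w = {1..<Suc m}" using sw k2 unfolding m_def by simp
      ultimately have "set w' = {1..<Suc m} - {m - p..<Suc m}" by simp
      moreover have "{1..<Suc m} - {m - p..<Suc m} = {(1::nat)..<m - p}"
        using mp by (rule_tac set_eqI) (simp only: Diff_iff atLeastLessThan_iff, linarith)
      ultimately have sw': "set w' = {1..<m - p}" by simp
      have n13': "\<not> dreaded13 w'"
      proof
        assume "dreaded13 w'"
        then obtain i where "Suc i < length w'" "int (w' ! i) < int (w' ! Suc i) - 1"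
          unfolding dreaded13_def by blast
        then have "Suc (i + Suc p) < length w \<and> int (w ! (i + Suc p)) < int (w ! Suc (i + Suc p)) - 1"
          unfolding w'_def by (simp add: add.commute)
        then show False using n13 unfolding dreaded13_def by blast
      qed
      have "length w' = length w - Suc p" unfolding w'_def by (rule length_drop)
      then have lw': "length w' < L" using L p(1) by linarith
      obtain ms where ms: "exec_moves \<infinity> \<infinity> ms ([], w', [m - p..<Suc N]) = Some ([], [], [1..<Suc N])"
      proof -
        have "1 \<le> m - p" "m - p \<le> Suc N" using mp kN unfolding m_def by linarith+
        then have "\<exists>ms. exec_moves \<infinity> \<infinity> ms ([], w', [m - p..<Suc N]) = Some ([], [], [1..<Suc N])"
          using less.IH[OF lw', rule_format, of w' "m - p"] d' sw' n13' by simp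
        then show ?thesis using that by blast
      qed
      have step: "apply_move \<infinity> \<infinity> (Pop (Suc p)) ([], w, [k..<Suc N]) = Some ([], w', [m - p..<Suc N])"
      proof -
        have "take (Suc p) w @ [k..<Suc N] = [m - p..<Suc N]"
          using tk kN k2 upt_add_eq_append[of "m - p" k "Suc N - k"] unfolding m_def by simp
        then show ?thesis using p unfolding w'_def by simp
      qed
      show ?thesis using step ms by (intro exI[of _ "Pop (Suc p) # ms"]) simp
    qed
  qed
qed

theorem proposition1:
  fixes \<pi> :: "nat list" and n :: nat
  assumes "length \<pi> = n" and "distinct \<pi>" and "set \<pi> = {1..n}"
  shows "\<not> sortable \<infinity> \<infinity> \<pi> \<longleftrightarrow>
    (\<forall>ms. allowable \<infinity> \<infinity> \<pi> ms \<and>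
           input_of (the (exec_moves \<infinity> \<infinity> ms (init_state \<pi>))) = [] \<longrightarrow>
       (\<exists>i\<le>length ms. dreaded13 (work_of (the (exec_moves \<infinity> \<infinity> (take i ms) (init_state \<pi>))))))"
proof
  assume ns: "\<not> sortable \<infinity> \<infinity> \<pi>"
  show "\<forall>ms. allowable \<infinity> \<infinity> \<pi> ms \<and>
           input_of (the (exec_moves \<infinity> \<infinity> ms (init_state \<pi>))) = [] \<longrightarrow>
       (\<exists>i\<le>length ms. dreaded13 (work_of (the (exec_moves \<infinity> \<infinity> (take i ms) (init_state \<pi>)))))"
  proof (intro allI impI)
    fix ms
    assume h: "allowable \<infinity> \<infinity> \<pi> ms \<and> input_of (the (exec_moves \<infinity> \<infinity> ms (init_state \<pi>))) = []"
    then obtain i w ou where ex: "exec_moves \<infinity> \<infinity> ms (init_state \<pi>) = Some (i, w, ou)"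
      and oo: "ou = [] \<or> (\<exists>k\<ge>1. ou = [k..<Suc n])"
      unfolding allowable_def using assms(1) by blast
    have i0: "i = []" using h ex unfolding input_of_def by simp
    show "\<exists>j\<le>length ms. dreaded13 (work_of (the (exec_moves \<infinity> \<infinity> (take j ms) (init_state \<pi>))))"
    proof (rule ccontr)
      assume "\<not> ?thesis"
      then have "\<not> dreaded13 (work_of (the (exec_moves \<infinity> \<infinity> (take (length ms) ms) (init_state \<pi>))))"
        by blast
      then have n13: "\<not> dreaded13 w" using ex unfolding work_of_def by simp
      have ms: "mset (w @ ou) = mset \<pi>" using exec_mset[OF ex[unfolded init_state_def]] i0 by simp
      then have dwo: "distinct (w @ ou)" using assms(2) by (metis mset_eq_imp_distinct_iff)
      have "set (w @ ou) = set \<pi>" using ms by (metis set_mset_mset)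
      then have swo: "set w \<union> set ou = {1..n}" using assms(3) by simp
      obtain k where k: "1 \<le> k" "k \<le> Suc n" "ou = [k..<Suc n]"
      proof (cases "ou = []")
        case True
        then show ?thesis using that[of "Suc n"] by simp
      next
        case False
        then obtain k where "k \<ge> 1" "ou = [k..<Suc n]" using oo by blast
        moreover have "k \<le> Suc n" using False calculation(2) by (cases "k \<le> Suc n") auto
        ultimately show ?thesis using that by blast
      qed
      have dj: "set w \<inter> set ou = {}" using dwo by simp
      have so: "set ou = {k..<Suc n}" using k(3) by (simp only: set_upt)
      have sw: "set w = {1..<k}"
      proof (rule set_eqI)
        fix x
        have "x \<in> set w \<longleftrightarrow> x \<in> {1..n} \<and> x \<notin> {k..<Suc n}" using swo dj so by blast
        then show "x \<in> set w \<longleftrightarrow> x \<in> {1..<k}" using k(1,2) by (simp only: atLeastLessThan_iff atLeastAtMost_iff, linarith)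
      qed
      obtain ms2 where ms2: "exec_moves \<infinity> \<infinity> ms2 ([], w, [k..<Suc n]) = Some ([], [], [1..<Suc n])"
        using pop_sort[of "length w" n, rule_format, of w k] dwo sw k(1) k(2) n13 by (simp del: upt_Suc) blast
      have "exec_moves \<infinity> \<infinity> (ms @ ms2) (init_state \<pi>) = Some ([], [], [1..<Suc (length \<pi>)])"
        using ex i0 k(3) ms2 assms(1) by (simp add: exec_append)
      then show False using ns unfolding sortable_def by blast
    qed
  qed
next
  assume R: "\<forall>ms. allowable \<infinity> \<infinity> \<pi> ms \<and>
           input_of (the (exec_moves \<infinity> \<infinity> ms (init_state \<pi>))) = [] \<longrightarrow>
       (\<exists>i\<le>length ms. dreaded13 (work_of (the (exec_moves \<infinity> \<infinity> (take i ms) (init_state \<pi>)))))"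
  show "\<not> sortable \<infinity> \<infinity> \<pi>"
  proof
    assume "sortable \<infinity> \<infinity> \<pi>"
    then obtain ms where ms: "exec_moves \<infinity> \<infinity> ms (init_state \<pi>) = Some ([], [], [1..<Suc n])"
      unfolding sortable_def using assms(1) by auto
    have "allowable \<infinity> \<infinity> \<pi> ms" unfolding allowable_def using ms assms(1) by auto
    moreover have "input_of (the (exec_moves \<infinity> \<infinity> ms (init_state \<pi>))) = []"
      using ms unfolding input_of_def by simp
    ultimately obtain j where j: "j \<le> length ms"
      and d: "dreaded13 (work_of (the (exec_moves \<infinity> \<infinity> (take j ms) (init_state \<pi>))))"
      using R by blast
    have "exec_moves \<infinity> \<infinity> (take j ms @ drop j ms) (init_state \<pi>) = Some ([], [], [1..<Suc n])"
      using ms by simp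
    then obtain st where st: "exec_moves \<infinity> \<infinity> (take j ms) (init_state \<pi>) = Some st"
      and st2: "exec_moves \<infinity> \<infinity> (drop j ms) st = Some ([], [], [1..<Suc n])"
      unfolding exec_append by (auto split: option.splits)
    obtain i0 w ou where sto: "st = (i0, w, ou)" by (cases st) auto
    from d obtain q where q: "Suc q < length w" "int (w ! q) < int (w ! Suc q) - 1"
      unfolding dreaded13_def work_of_def st sto by auto
    have "w = take q w @ w ! q # w ! Suc q # drop (Suc (Suc q)) w"
      using q(1) by (metis Cons_nth_drop_Suc Suc_lessD append_take_drop_id)
    then have "exec_moves \<infinity> \<infinity> (drop j ms) (i0, take q w @ w ! q # w ! Suc q # drop (Suc (Suc q)) w, ou)
       = Some ([], [], [1..<Suc n])" using st2 sto by simp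
    from no13_sorting[OF this] q(2) show False by simp
  qed
qed

end
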